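(* Let $k\geq 2$ be an integer and let $P$ be a finite poset of width $w$ that does not contain $\mathbf{k}+\mathbf{k}$ as an induced subposet. Then the incomparability graph $G$ of $P$ has pathwidth at most $(2k-3)w-1$.
   Context: The width of a poset is the maximum size of an antichain. $\mathbf{k}+\mathbf{k}$ denotes the poset consisting of two disjoint chains $A,B$ with $|A|=|B|=k$ in which every element of $A$ is incomparable with every element of $B$; "$P$ does not contain $\mathbf{k}+\mathbf{k}$" means $P$ has no induced subposet isomorphic to it. The incomparability graph of $P$ has the elements of $P$ as vertices, two distinct vertices being adjacent iff they are incomparable in $P$. A path decomposition of a graph $G$ is a sequence $B_1,\dots,B_m$ of vertex subsets such that each vertex lies in a nonempty set of consecutive $B_i$'s and each edge has both endpoints in some $B_i$; its width is $\max_i |B_i|-1$, and the pathwidth of $G$ is the minimum width of a path decomposition of $G$. *)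

theory Defs
  imports Main
begin

definition partial_order_on' :: "'a set \<Rightarrow> ('a \<Rightarrow> 'a \<Rightarrow> bool) \<Rightarrow> bool" where
  "partial_order_on' V le \<longleftrightarrow>
     (\<forall>x\<in>V. le x x) \<and>
     (\<forall>x\<in>V. \<forall>y\<in>V. le x y \<and> le y x \<longrightarrow> x = y) \<and>
     (\<forall>x\<in>V. \<forall>y\<in>V. \<forall>z\<in>V. le x y \<and> le y z \<longrightarrow> le x z)"

definition comparable :: "('a \<Rightarrow> 'a \<Rightarrow> bool) \<Rightarrow> 'a \<Rightarrow> 'a \<Rightarrow> bool" where
  "comparable le x y \<longleftrightarrow> le x y \<or> le y x"

definition is_chain :: "('a \<Rightarrow> 'a \<Rightarrow> bool) \<Rightarrow> 'a set \<Rightarrow> bool" where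
  "is_chain le C \<longleftrightarrow> (\<forall>x\<in>C. \<forall>y\<in>C. comparable le x y)"

definition is_antichain :: "('a \<Rightarrow> 'a \<Rightarrow> bool) \<Rightarrow> 'a set \<Rightarrow> bool" where
  "is_antichain le A \<longleftrightarrow> (\<forall>x\<in>A. \<forall>y\<in>A. x \<noteq> y \<longrightarrow> \<not> comparable le x y)"

definition width :: "'a set \<Rightarrow> ('a \<Rightarrow> 'a \<Rightarrow> bool) \<Rightarrow> nat" where
  "width V le = Max {card A | A. A \<subseteq> V \<and> is_antichain le A}"

definition contains_kk :: "'a set \<Rightarrow> ('a \<Rightarrow> 'a \<Rightarrow> bool) \<Rightarrow> nat \<Rightarrow> bool" where
  "contains_kk V le k \<longleftrightarrow>
     (\<exists>A B. A \<subseteq> V \<and> B \<subseteq> V \<and> card A = k \<and> card B = k \<and> A \<inter> B = {} \<and>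
            is_chain le A \<and> is_chain le B \<and>
            (\<forall>a\<in>A. \<forall>b\<in>B. \<not> comparable le a b))"

definition incomp_edge :: "'a set \<Rightarrow> ('a \<Rightarrow> 'a \<Rightarrow> bool) \<Rightarrow> 'a \<Rightarrow> 'a \<Rightarrow> bool" where
  "incomp_edge V le x y \<longleftrightarrow> x \<in> V \<and> y \<in> V \<and> x \<noteq> y \<and> \<not> comparable le x y"

text \<open>Path decomposition of a graph (V,E): nonempty sequence of bags (list index i = B_(i+1)).\<close>
definition is_path_decomposition ::
  "'a set \<Rightarrow> ('a \<Rightarrow> 'a \<Rightarrow> bool) \<Rightarrow> 'a set list \<Rightarrow> bool" where
  "is_path_decomposition V E Bs \<longleftrightarrow>
     Bs \<noteq> [] \<and>
     (\<forall>i<length Bs. Bs ! i \<subseteq> V) \<and>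
     (\<forall>v\<in>V. \<exists>i<length Bs. v \<in> Bs ! i) \<and>
     (\<forall>v\<in>V. \<forall>i j l. i \<le> j \<and> j \<le> l \<and> l < length Bs \<and> v \<in> Bs ! i \<and> v \<in> Bs ! l
                   \<longrightarrow> v \<in> Bs ! j) \<and>
     (\<forall>x\<in>V. \<forall>y\<in>V. E x y \<longrightarrow> (\<exists>i<length Bs. x \<in> Bs ! i \<and> y \<in> Bs ! i))"

definition pd_width :: "'a set list \<Rightarrow> int" where
  "pd_width Bs = Max {int (card B) - 1 | B. B \<in> set Bs}"

definition pathwidth :: "'a set \<Rightarrow> ('a \<Rightarrow> 'a \<Rightarrow> bool) \<Rightarrow> int" where
  "pathwidth V E = Min {pd_width Bs | Bs. is_path_decomposition V E Bs}"

end

theory Submission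
  imports Defs
begin

definition schain :: "'a set \<Rightarrow> ('a \<Rightarrow> 'a \<Rightarrow> bool) \<Rightarrow> (nat \<Rightarrow> 'a) \<Rightarrow> nat \<Rightarrow> bool" where
  "schain V le f m \<longleftrightarrow> (\<forall>i<m. f i \<in> V) \<and> (\<forall>i. Suc i < m \<longrightarrow> le (f i) (f (Suc i)) \<and> f i \<noteq> f (Suc i))"

lemma po_refl: "partial_order_on' V le \<Longrightarrow> x \<in> V \<Longrightarrow> le x x"
  unfolding partial_order_on'_def by blast
lemma po_antisym: "partial_order_on' V le \<Longrightarrow> x \<in> V \<Longrightarrow> y \<in> V \<Longrightarrow> le x y \<Longrightarrow> le y x \<Longrightarrow> x = y"
  unfolding partial_order_on'_def by blast
lemma po_trans: "partial_order_on' V le \<Longrightarrow> x \<in> V \<Longrightarrow> y \<in> V \<Longrightarrow> z \<in> V \<Longrightarrow> le x y \<Longrightarrow> le y z \<Longrightarrow> le x z"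
  unfolding partial_order_on'_def by blast

lemma schain_lt:
  assumes po: "partial_order_on' V le" and sc: "schain V le f m" and "i < j" "j < m"
  shows "le (f i) (f j) \<and> f i \<noteq> f j"
  using assms(3,4)
proof (induction j)
  case 0 then show ?case by simp
next
  case (Suc j)
  have fj: "f j \<in> V" "f (Suc j) \<in> V" "f i \<in> V" using sc Suc.prems unfolding schain_def by auto
  have step: "le (f j) (f (Suc j)) \<and> f j \<noteq> f (Suc j)" using sc Suc.prems unfolding schain_def by auto
  show ?case
  proof (cases "i = j")
    case True then show ?thesis using step by simp
  next
    case False
    then have ih: "le (f i) (f j) \<and> f i \<noteq> f j" using Suc by simp
    have "le (f i) (f (Suc j))" using po_trans[OF po] fj ih step by blast
    moreover have "f i \<noteq> f (Suc j)"
    proof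
      assume "f i = f (Suc j)"
      then have "le (f j) (f i)" using step by simp
      then have "f i = f j" using po_antisym[OF po] fj ih by blast
      then show False using ih by simp
    qed
    ultimately show ?thesis by simp
  qed
qed

lemma mirsky:
  assumes po: "partial_order_on' V le"
  shows "finite S \<Longrightarrow> S \<subseteq> V \<Longrightarrow> (\<And>A. A \<subseteq> S \<Longrightarrow> is_antichain le A \<Longrightarrow> card A \<le> w)
    \<Longrightarrow> \<not>(\<exists>f. schain V le f (Suc h) \<and> (\<forall>i<Suc h. f i \<in> S)) \<Longrightarrow> card S \<le> h * w"
proof (induction h arbitrary: S)
  case 0
  have "S = {}"
  proof (rule ccontr)
    assume "S \<noteq> {}" then obtain x where x: "x \<in> S" by blast
    then have "schain V le (\<lambda>_. x) (Suc 0) \<and> (\<forall>i<Suc 0. (\<lambda>_. x) i \<in> S)"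
      using "0.prems"(2) unfolding schain_def by auto
    then show False using "0.prems"(4) by blast
  qed
  then show ?case by simp
next
  case (Suc h)
  define Mx where "Mx = {x\<in>S. \<forall>y\<in>S. le x y \<longrightarrow> x = y}"
  have sub: "Mx \<subseteq> S" unfolding Mx_def by auto
  have "is_antichain le Mx" unfolding is_antichain_def comparable_def Mx_def by auto
  hence c1: "card Mx \<le> w" using Suc.prems(3) sub by auto
  have nc: "\<not>(\<exists>f. schain V le f (Suc h) \<and> (\<forall>i<Suc h. f i \<in> S - Mx))"
  proof
    assume "\<exists>f. schain V le f (Suc h) \<and> (\<forall>i<Suc h. f i \<in> S - Mx)"
    then obtain f where f: "schain V le f (Suc h)" "\<forall>i<Suc h. f i \<in> S - Mx" by blast
    then have "f h \<in> S" "f h \<notin> Mx" by auto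
    then obtain y where y: "y \<in> S" "le (f h) y" "f h \<noteq> y" unfolding Mx_def by auto
    define g where "g = f(Suc h := y)"
    have "schain V le g (Suc (Suc h)) \<and> (\<forall>i<Suc (Suc h). g i \<in> S)"
      using f y Suc.prems(2) unfolding schain_def g_def by (auto simp: less_Suc_eq)
    then show False using Suc.prems(4) by blast
  qed
  have "card (S - Mx) \<le> h * w" 
  proof (rule Suc.IH[of "S - Mx"])
    show "finite (S - Mx)" using Suc.prems(1) by simp
    show "S - Mx \<subseteq> V" using Suc.prems(2) by auto
    show "\<And>A. A \<subseteq> S - Mx \<Longrightarrow> is_antichain le A \<Longrightarrow> card A \<le> w" using Suc.prems(3) by auto
    show "\<not>(\<exists>f. schain V le f (Suc h) \<and> (\<forall>i<Suc h. f i \<in> S - Mx))" by (rule nc)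
  qed
  moreover have "card (S - Mx) = card S - card Mx" using card_Diff_subset sub Suc.prems(1)
    by (meson finite_subset)
  moreover have "card Mx \<le> card S" using card_mono[OF Suc.prems(1) sub] .
  ultimately show ?case using c1 by simp
qed

lemma core:
  fixes pos :: "'a \<Rightarrow> nat"
  assumes po: "partial_order_on' V le" and kj: "k = j + 2"
  and posLE: "\<And>x y. x \<in> V \<Longrightarrow> y \<in> V \<Longrightarrow> le x y \<Longrightarrow> x \<noteq> y \<Longrightarrow> pos x < pos y"
  and posKM: "\<And>x y. x \<in> V \<Longrightarrow> y \<in> V \<Longrightarrow> pos x \<le> pos y \<Longrightarrow> card (K x) \<le> card (K y)"
  and Kdef: "\<And>x. K x = {u. \<exists>f. schain V le f k \<and> f 0 = u \<and> f (k-1) = x}"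
  and finV: "finite V"
  and sc: "schain V le y (2*j+2)"
  and top: "pos (y (2*j+1)) \<le> p"
  and zV: "z \<in> V" and zp: "p \<le> pos z" and zy: "y 0 = z \<or> \<not> comparable le (y 0) z"
  shows "contains_kk V le k"
proof -
  have yV: "\<And>s. s < 2*j+2 \<Longrightarrow> y s \<in> V" using sc unfolding schain_def by auto
  have ylt: "\<And>a b. a < b \<Longrightarrow> b < 2*j+2 \<Longrightarrow> le (y a) (y b) \<and> y a \<noteq> y b"
    using schain_lt[OF po sc] by blast
  have yle: "\<And>a b. a \<le> b \<Longrightarrow> b < 2*j+2 \<Longrightarrow> le (y a) (y b)"
  proof -
    fix a b assume "a \<le> b" "b < 2*j+2"
    then show "le (y a) (y b)" using ylt[of a b] po_refl[OF po yV[of b]] by (cases "a = b") auto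
  qed
  define t where "t = y (2*j+1)"
  have tV: "t \<in> V" unfolding t_def using yV by simp
  have post: "\<And>s. s < 2*j+2 \<Longrightarrow> pos (y s) \<le> pos t"
  proof -
    fix s assume s: "s < 2*j+2"
    show "pos (y s) \<le> pos t"
    proof (cases "s = 2*j+1")
      case True then show ?thesis by (simp add: t_def)
    next
      case False then have "s < 2*j+1" using s by simp
      then show ?thesis using posLE[of "y s" t] ylt[of s "2*j+1"] yV s tV unfolding t_def by fastforce
    qed
  qed
  have y0z: "\<not> comparable le (y 0) z"
  proof
    assume c: "comparable le (y 0) z"
    then have "y 0 = z" using zy by simp
    moreover have "pos (y 0) < pos t" using posLE[of "y 0" t] ylt[of 0 "2*j+1"] yV tV unfolding t_def by fastforce
    ultimately show False using top zp unfolding t_def by simp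
  qed
  have inc: "\<And>s. s < 2*j+2 \<Longrightarrow> \<not> le z (y s) \<and> \<not> le (y s) z"
  proof -
    fix s assume s: "s < 2*j+2"
    have a: "le (y 0) (y s)" using yle s by simp
    show "\<not> le z (y s) \<and> \<not> le (y s) z"
    proof
      show "\<not> le z (y s)"
      proof
        assume l: "le z (y s)"
        show False
        proof (cases "z = y s")
          case True then show False using a y0z unfolding comparable_def by simp
        next
          case False
          then have "pos z < pos (y s)" using posLE[OF zV yV[OF s] l] by simp
          then show False using post[OF s] top zp unfolding t_def by simp
        qed
      qed
      show "\<not> le (y s) z"
      proof
        assume "le (y s) z"
        then have "le (y 0) z" using po_trans[OF po yV[of 0] yV[OF s] zV a] by simp
        then show False using y0z unfolding comparable_def by simp
      qed
    qed
  qed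
  have KV: "\<And>x. K x \<subseteq> V"
    unfolding Kdef schain_def using kj by fastforce
  have Kfin: "\<And>x. finite (K x)" using finite_subset[OF KV finV] .
  have mkK: "\<And>v. v \<in> V \<Longrightarrow> le v (y (j+1)) \<Longrightarrow> v \<noteq> y (j+1) \<Longrightarrow> v \<in> K t"
  proof -
    fix v assume v: "v \<in> V" "le v (y (j+1))" "v \<noteq> y (j+1)"
    define f where "f = (\<lambda>i::nat. if i = 0 then v else y (i + j))"
    have "schain V le f k"
      unfolding schain_def
    proof (rule conjI; intro allI impI)
      fix i assume "i < k" then show "f i \<in> V" using v yV kj unfolding f_def by auto
    next
      fix i assume i: "Suc i < k"
      show "le (f i) (f (Suc i)) \<and> f i \<noteq> f (Suc i)"
      proof (cases "i = 0")
        case True then show ?thesis using v unfolding f_def by simp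
      next
        case False then show ?thesis using ylt[of "i+j" "Suc i + j"] i kj unfolding f_def by simp
      qed
    qed
    moreover have "f 0 = v" "f (k-1) = t" unfolding f_def t_def using kj by (auto simp: mult_2)
    ultimately show "v \<in> K t" unfolding Kdef by blast
  qed
  have y0Kt: "y 0 \<in> K t" using mkK yV ylt[of 0 "j+1"] by simp
  have Kle: "\<And>v x. v \<in> K x \<Longrightarrow> le v x"
  proof -
    fix v x assume "v \<in> K x"
    then obtain f where f: "schain V le f k" "f 0 = v" "f (k-1) = x" unfolding Kdef by blast
    show "le v x" using schain_lt[OF po f(1), of 0 "k-1"] f kj by simp
  qed
  have y0Kz: "y 0 \<notin> K z" using Kle y0z unfolding comparable_def by blast
  have cK: "card (K t) \<le> card (K z)" using posKM[OF tV zV] top zp unfolding t_def by simp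
  obtain u where u: "u \<in> K z" "u \<notin> K t"
  proof (rule ccontr)
    assume "\<not> thesis"
    then have "K z \<subseteq> K t" using that by blast
    then have "K z \<subset> K t" using y0Kt y0Kz by blast
    then have "card (K z) < card (K t)" using psubset_card_mono Kfin by blast
    then show False using cK by simp
  qed
  obtain g where g: "schain V le g k" "g 0 = u" "g (k-1) = z" using u(1) unfolding Kdef by blast
  have gV: "\<And>i. i < k \<Longrightarrow> g i \<in> V" using g(1) unfolding schain_def by auto
  have glt: "\<And>a b. a < b \<Longrightarrow> b < k \<Longrightarrow> le (g a) (g b) \<and> g a \<noteq> g b"
    using schain_lt[OF po g(1)] by blast
  have gle: "\<And>a b. a \<le> b \<Longrightarrow> b < k \<Longrightarrow> le (g a) (g b)"
  proof -
    fix a b assume "a \<le> b" "b < k"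
    then show "le (g a) (g b)" using glt[of a b] po_refl[OF po gV[of b]] by (cases "a = b") auto
  qed
  have key: "\<And>i s. i < k \<Longrightarrow> s < k \<Longrightarrow> \<not> comparable le (g i) (y s)"
  proof -
    fix i s assume i: "i < k" and s: "s < k"
    have s2: "s < 2*j+2" using s kj by simp
    have giz: "le (g i) z" using gle[of i "k-1"] i g(3) by simp
    have ugi: "le u (g i)" using gle[of 0 i] i g(2) by simp
    show "\<not> comparable le (g i) (y s)"
      unfolding comparable_def
    proof
      assume "le (g i) (y s) \<or> le (y s) (g i)"
      then show False
      proof
        assume l: "le (g i) (y s)"
        have uV: "u \<in> V" using gV[of 0] g(2) kj by simp
        have "le u (y s)" using po_trans[OF po uV gV[OF i] yV[OF s2] ugi l] .
        moreover have "le (y s) (y (j+1))" using yle[of s "j+1"] s kj by simp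
        moreover have yj: "y (j+1) \<in> V" using yV by simp
        ultimately have uy: "le u (y (j+1))" using po_trans[OF po uV yV[OF s2] yj] by simp
        have "u \<noteq> y (j+1)"
        proof
          assume "u = y (j+1)"
          moreover have "le u z" using gle[of 0 "k-1"] g kj by simp
          ultimately show False using inc[of "j+1"] by simp
        qed
        then have "u \<in> K t" using mkK uV uy by simp
        then show False using u by simp
      next
        assume "le (y s) (g i)"
        then have "le (y s) z" using po_trans[OF po yV[OF s2] gV[OF i] zV] giz by simp
        then show False using inc[OF s2] by simp
      qed
    qed
  qed
  define A where "A = g ` {..<k}"
  define B where "B = y ` {..<k}"
  have injg: "inj_on g {..<k}"
  proof (rule inj_onI)
    fix a b assume "a \<in> {..<k}" "b \<in> {..<k}" "g a = g b"
    then show "a = b" using glt[of a b] glt[of b a] by (metis lessThan_iff linorder_neqE_nat)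
  qed
  have injy: "inj_on y {..<k}"
  proof (rule inj_onI)
    fix a b assume "a \<in> {..<k}" "b \<in> {..<k}" "y a = y b"
    moreover have "a < 2*j+2" "b < 2*j+2" using \<open>a \<in> {..<k}\<close> \<open>b \<in> {..<k}\<close> kj by auto
    ultimately show "a = b" using ylt[of a b] ylt[of b a] by (metis linorder_neqE_nat)
  qed
  have "A \<subseteq> V" unfolding A_def using gV by auto
  moreover have "B \<subseteq> V" unfolding B_def using yV kj by auto
  moreover have "card A = k" unfolding A_def using card_image[OF injg] by simp
  moreover have "card B = k" unfolding B_def using card_image[OF injy] by simp
  moreover have "A \<inter> B = {}"
  proof (rule ccontr)
    assume "A \<inter> B \<noteq> {}"
    then obtain i s where "i < k" "s < k" "g i = y s" unfolding A_def B_def by auto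
    then show False using key[of i s] po_refl[OF po] gV unfolding comparable_def by metis
  qed
  moreover have "is_chain le A" unfolding is_chain_def A_def comparable_def
  proof (intro ballI)
    fix a b assume "a \<in> g ` {..<k}" "b \<in> g ` {..<k}"
    then obtain a' b' where ab: "a = g a'" "b = g b'" "a' < k" "b' < k" by auto
    show "le a b \<or> le b a" using ab glt[of a' b'] glt[of b' a'] po_refl[OF po] gV by (metis linorder_neqE_nat)
  qed
  moreover have "is_chain le B" unfolding is_chain_def B_def comparable_def
  proof (intro ballI)
    fix a b assume "a \<in> y ` {..<k}" "b \<in> y ` {..<k}"
    then obtain a' b' where ab: "a = y a'" "b = y b'" "a' < 2*j+2" "b' < 2*j+2" using kj by auto
    show "le a b \<or> le b a" using ab ylt[of a' b'] ylt[of b' a'] po_refl[OF po] yV by (metis linorder_neqE_nat)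
  qed
  moreover have "\<forall>a\<in>A. \<forall>b\<in>B. \<not> comparable le a b" unfolding A_def B_def using key by auto
  ultimately show ?thesis unfolding contains_kk_def by blast
qed

lemma antichain_le_width:
  assumes "finite V" "A \<subseteq> V" "is_antichain le A"
  shows "card A \<le> width V le"
proof -
  have "{card A | A. A \<subseteq> V \<and> is_antichain le A} \<subseteq> card ` Pow V" by auto
  then have "finite {card A | A. A \<subseteq> V \<and> is_antichain le A}"
    using assms(1) finite_subset by blast
  then show ?thesis unfolding width_def using assms by (intro Max_ge) auto
qed

theorem corollary2:
  fixes V :: "'a set" and le :: "'a \<Rightarrow> 'a \<Rightarrow> bool" and k :: nat
  assumes "k \<ge> 2"
    and "finite V"
    and "partial_order_on' V le"
    and "\<not> contains_kk V le k"
  shows "pathwidth V (incomp_edge V le) \<le> (2 * int k - 3) * int (width V le) - 1"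
proof -
  note po = assms(3) and finV = assms(2)
  obtain j where kj: "k = j + 2" using assms(1) by (metis add.commute le_Suc_ex)
  define K where "K = (\<lambda>x. {u. \<exists>f. schain V le f k \<and> f 0 = u \<and> f (k-1) = x})"
  define D where "D = (\<lambda>x. {u\<in>V. le u x \<and> u \<noteq> x})"
  define N where "N = card V + 1"
  define pos where "pos = (\<lambda>x. card (K x) * N + card (D x))"
  define bag where "bag = (\<lambda>p. {x\<in>V. pos x \<le> p \<and> (\<exists>y\<in>V. p \<le> pos y \<and> (x = y \<or> \<not> comparable le x y))})"
  define Bs where "Bs = map bag [0..<N*N]"
  have KV: "\<And>x. K x \<subseteq> V" unfolding K_def schain_def using kj by fastforce
  have DV: "\<And>x. D x \<subseteq> V" unfolding D_def by auto
  have cK: "\<And>x. card (K x) < N" unfolding N_def using card_mono[OF finV KV] by (simp add: less_Suc_eq_le)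
  have cD: "\<And>x. card (D x) < N" unfolding N_def using card_mono[OF finV DV] by (simp add: less_Suc_eq_le)
  have Kmono: "\<And>x y. x \<in> V \<Longrightarrow> y \<in> V \<Longrightarrow> le x y \<Longrightarrow> x \<noteq> y \<Longrightarrow> K x \<subseteq> K y"
  proof
    fix x y u assume xy: "x \<in> V" "y \<in> V" "le x y" "x \<noteq> y" and u: "u \<in> K x"
    then obtain f where f: "schain V le f k" "f 0 = u" "f (k-1) = x" unfolding K_def by blast
    define f' where "f' = f(k-1 := y)"
    have "schain V le f' k" unfolding schain_def
    proof (rule conjI; intro allI impI)
      fix i assume "i < k" then show "f' i \<in> V" using f xy unfolding f'_def schain_def by auto
    next
      fix i assume i: "Suc i < k"
      show "le (f' i) (f' (Suc i)) \<and> f' i \<noteq> f' (Suc i)"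
      proof (cases "Suc i = k - 1")
        case False
        then show ?thesis using f(1) i unfolding schain_def f'_def by auto
      next
        case True
        have fi: "le (f i) x \<and> f i \<noteq> x" using schain_lt[OF po f(1), of i "k-1"] f(3) True i by simp
        have fiV: "f i \<in> V" using f(1) i unfolding schain_def by auto
        have "le (f i) y" using po_trans[OF po fiV xy(1,2)] fi xy(3) by simp
        moreover have "f i \<noteq> y"
        proof
          assume "f i = y" then have "le y x" using fi by simp
          then show False using po_antisym[OF po xy(1,2) xy(3)] xy(4) by simp
        qed
        ultimately show ?thesis using True i unfolding f'_def by auto
      qed
    qed
    moreover have "f' 0 = u" "f' (k-1) = y" unfolding f'_def using f kj by auto
    ultimately show "u \<in> K y" unfolding K_def by blast
  qed
  have posLE: "\<And>x y. x \<in> V \<Longrightarrow> y \<in> V \<Longrightarrow> le x y \<Longrightarrow> x \<noteq> y \<Longrightarrow> pos x < pos y"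
  proof -
    fix x y assume xy: "x \<in> V" "y \<in> V" "le x y" "x \<noteq> y"
    have "card (K x) \<le> card (K y)" using card_mono[OF finite_subset[OF KV finV] Kmono[OF xy]] .
    then have a: "card (K x) * N \<le> card (K y) * N" by (rule mult_le_mono1)
    have "D x \<subset> D y"
    proof
      show "D x \<subseteq> D y"
      proof
        fix u assume "u \<in> D x"
        then have u: "u \<in> V" "le u x" "u \<noteq> x" unfolding D_def by auto
        have "le u y" using po_trans[OF po u(1) xy(1,2) u(2) xy(3)] .
        moreover have "u \<noteq> y"
        proof
          assume "u = y" then show False using po_antisym[OF po xy(1,2) xy(3)] u xy(4) by simp
        qed
        ultimately show "u \<in> D y" unfolding D_def using u by simp
      qed
      show "D x \<noteq> D y" using xy unfolding D_def by auto
    qed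
    then have "card (D x) < card (D y)" using psubset_card_mono finite_subset[OF DV finV] by blast
    then show "pos x < pos y" unfolding pos_def using a by (metis add_less_le_mono add.commute)
  qed
  have posKM: "\<And>x y. x \<in> V \<Longrightarrow> y \<in> V \<Longrightarrow> pos x \<le> pos y \<Longrightarrow> card (K x) \<le> card (K y)"
  proof (rule ccontr)
    fix x y assume "pos x \<le> pos y" "\<not> card (K x) \<le> card (K y)"
    then have "Suc (card (K y)) \<le> card (K x)" by simp
    then have "Suc (card (K y)) * N \<le> card (K x) * N" by (rule mult_le_mono1)
    then have "pos y < pos x" unfolding pos_def using cD[of y] by simp
    then show False using \<open>pos x \<le> pos y\<close> by simp
  qed
  have posb: "\<And>x. pos x < N * N"
  proof -
    fix x
    have "Suc (card (K x)) * N \<le> N * N" using cK[of x] by (intro mult_le_mono1) simp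
    then show "pos x < N * N" unfolding pos_def using cD[of x] by simp
  qed
  have bagV: "\<And>p. bag p \<subseteq> V" unfolding bag_def by auto
  have pd: "is_path_decomposition V (incomp_edge V le) Bs"
    unfolding is_path_decomposition_def
  proof (intro conjI)
    show "Bs \<noteq> []" unfolding Bs_def N_def by simp
    show "\<forall>i<length Bs. Bs ! i \<subseteq> V" unfolding Bs_def using bagV by simp
    show "\<forall>v\<in>V. \<exists>i<length Bs. v \<in> Bs ! i"
    proof
      fix v assume v: "v \<in> V"
      have "v \<in> bag (pos v)" unfolding bag_def using v by auto
      then show "\<exists>i<length Bs. v \<in> Bs ! i" unfolding Bs_def using posb[of v] by (intro exI[of _ "pos v"]) simp
    qed
    show "\<forall>v\<in>V. \<forall>i j l. i \<le> j \<and> j \<le> l \<and> l < length Bs \<and> v \<in> Bs ! i \<and> v \<in> Bs ! l \<longrightarrow> v \<in> Bs ! j"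
    proof (intro ballI allI impI)
      fix v i j' l assume v: "v \<in> V" and h: "i \<le> j' \<and> j' \<le> l \<and> l < length Bs \<and> v \<in> Bs ! i \<and> v \<in> Bs ! l"
      then have "v \<in> bag i" "v \<in> bag l" "j' < N * N" "i < N*N" "l < N*N" unfolding Bs_def by auto
      then have "pos v \<le> i" "\<exists>y\<in>V. l \<le> pos y \<and> (v = y \<or> \<not> comparable le v y)" unfolding bag_def by auto
      then have "v \<in> bag j'" unfolding bag_def using v h by (auto intro: order_trans)
      then show "v \<in> Bs ! j'" unfolding Bs_def using \<open>j' < N * N\<close> by simp
    qed
    show "\<forall>x\<in>V. \<forall>y\<in>V. incomp_edge V le x y \<longrightarrow> (\<exists>i<length Bs. x \<in> Bs ! i \<and> y \<in> Bs ! i)"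
    proof (intro ballI impI)
      fix x y assume xy: "x \<in> V" "y \<in> V" "incomp_edge V le x y"
      then have nc: "\<not> comparable le x y" "\<not> comparable le y x" unfolding incomp_edge_def comparable_def by auto
      show "\<exists>i<length Bs. x \<in> Bs ! i \<and> y \<in> Bs ! i"
      proof (cases "pos x \<le> pos y")
        case True
        then have "x \<in> bag (pos y)" "y \<in> bag (pos y)" unfolding bag_def using xy nc by auto
        then show ?thesis unfolding Bs_def using posb[of y] by (intro exI[of _ "pos y"]) simp
      next
        case False
        then have "x \<in> bag (pos x)" "y \<in> bag (pos x)" unfolding bag_def using xy nc by auto
        then show ?thesis unfolding Bs_def using posb[of x] by (intro exI[of _ "pos x"]) simp
      qed
    qed
  qed
  have bagcard: "\<And>p. card (bag p) \<le> (2*j+1) * width V le"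
  proof -
    fix p
    show "card (bag p) \<le> (2*j+1) * width V le"
    proof (rule mirsky[OF po])
      show "finite (bag p)" using finite_subset[OF bagV finV] .
      show "bag p \<subseteq> V" by (rule bagV)
      show "\<And>A. A \<subseteq> bag p \<Longrightarrow> is_antichain le A \<Longrightarrow> card A \<le> width V le"
        using antichain_le_width[OF finV] bagV by blast
      show "\<not>(\<exists>f. schain V le f (Suc (2*j+1)) \<and> (\<forall>i<Suc (2*j+1). f i \<in> bag p))"
      proof
        assume "\<exists>f. schain V le f (Suc (2*j+1)) \<and> (\<forall>i<Suc (2*j+1). f i \<in> bag p)"
        then obtain y where y: "schain V le y (2*j+2)" "\<forall>i<2*j+2. y i \<in> bag p" by auto
        have "y (2*j+1) \<in> bag p" "y 0 \<in> bag p" using y(2) by auto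
        then have top: "pos (y (2*j+1)) \<le> p" and "\<exists>z\<in>V. p \<le> pos z \<and> (y 0 = z \<or> \<not> comparable le (y 0) z)"
          unfolding bag_def by auto
        then obtain z where z: "z \<in> V" "p \<le> pos z" "y 0 = z \<or> \<not> comparable le (y 0) z" by blast
        have "contains_kk V le k"
          by (rule core[OF po kj posLE posKM K_def[THEN fun_cong] finV y(1) top z]) auto
        then show False using assms(4) by simp
      qed
    qed
  qed
  have fin_bags: "finite ((\<lambda>B. int (card B) - 1) ` set Bs)" by simp
  have ne_bags: "(\<lambda>B. int (card B) - 1) ` set Bs \<noteq> {}" using pd unfolding is_path_decomposition_def by simp
  have "pd_width Bs \<le> (2 * int k - 3) * int (width V le) - 1"
  proof -
    have "pd_width Bs = Max ((\<lambda>B. int (card B) - 1) ` set Bs)" unfolding pd_width_def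
      by (simp add: Setcompr_eq_image)
    also have "\<dots> \<le> (2 * int k - 3) * int (width V le) - 1"
    proof (subst Max_le_iff[OF fin_bags ne_bags], intro ballI)
      fix a assume "a \<in> (\<lambda>B. int (card B) - 1) ` set Bs"
      then obtain p where "a = int (card (bag p)) - 1" unfolding Bs_def by auto
      moreover have "int (card (bag p)) \<le> int ((2*j+1) * width V le)" using bagcard[of p] of_nat_le_iff by blast
      moreover have "int ((2*j+1) * width V le) = (2 * int k - 3) * int (width V le)" using kj by (simp add: algebra_simps)
      ultimately show "a \<le> (2 * int k - 3) * int (width V le) - 1" by simp
    qed
    finally show ?thesis .
  qed
  moreover have "pathwidth V (incomp_edge V le) \<le> pd_width Bs"
  proof -
    let ?S = "{pd_width Bs | Bs. is_path_decomposition V (incomp_edge V le) Bs}"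
    have "?S \<subseteq> {-1..int (card V)}"
    proof
      fix a assume "a \<in> ?S"
      then obtain Cs where Cs: "a = pd_width Cs" "is_path_decomposition V (incomp_edge V le) Cs" by blast
      have fin: "finite ((\<lambda>B. int (card B) - 1) ` set Cs)" by simp
      have ne: "(\<lambda>B. int (card B) - 1) ` set Cs \<noteq> {}" using Cs(2) unfolding is_path_decomposition_def by simp
      have "a = Max ((\<lambda>B. int (card B) - 1) ` set Cs)" unfolding Cs(1) pd_width_def
        by (simp add: Setcompr_eq_image)
      then have "a \<in> (\<lambda>B. int (card B) - 1) ` set Cs" using Max_in[OF fin ne] by simp
      then obtain B where B: "B \<in> set Cs" "a = int (card B) - 1" by auto
      have "B \<subseteq> V" using B(1) Cs(2) unfolding is_path_decomposition_def by (auto simp: in_set_conv_nth)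
      then have "card B \<le> card V" using card_mono[OF finV] by simp
      then show "a \<in> {-1..int (card V)}" using B(2) by simp
    qed
    then have "finite ?S" using finite_subset by blast
    then show ?thesis unfolding pathwidth_def using pd by (intro Min_le) auto
  qed
  ultimately show ?thesis by simp
qed

end
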